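(* Under the standing setup, every vertex $v\in R'$ satisfies $d_G(v)>\frac13\alpha n$.
   Context: Standing setup: $k\ge1$, $\ell\ge4$ integers; $h=k+\lfloor\ell/2\rfloor-1$; $t=(\ell^2-\ell+1)k+\frac{\ell^2+3\ell-2}{2}$; $\alpha=\frac{1}{2(h+1)t^2}$; $n\ge t^2/\alpha^3$. $G$ is a graph of order $n$ that contains no copy of $kS_{\ell-1}\cup P_\ell$ (vertex-disjoint union of $k$ stars $K_{1,\ell-1}$ and a path on $\ell$ vertices) and has maximum spectral radius $\rho=\rho(G)$ among all such graphs of order $n$; $G$ is connected. $\mathbf{x}=(x_v)$ is the Perron vector of $G$, and $z$ is a vertex with $x_z=\max_v x_v$. $R'=\{v\in V(G): x_v>4\alpha x_z\}$. $d_G(v)$ is the degree of $v$. *)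

theory Defs
  imports Complex_Main "Jordan_Normal_Form.Spectral_Radius"
begin

definition simple_graph :: "nat \<Rightarrow> (nat \<Rightarrow> nat \<Rightarrow> bool) \<Rightarrow> bool" where
  "simple_graph n E \<longleftrightarrow>
     (\<forall>u v. E u v \<longrightarrow> u < n \<and> v < n \<and> u \<noteq> v) \<and> (\<forall>u v. E u v \<longrightarrow> E v u)"

definition graph_connected :: "nat \<Rightarrow> (nat \<Rightarrow> nat \<Rightarrow> bool) \<Rightarrow> bool" where
  "graph_connected n E \<longleftrightarrow> (\<forall>u v. u < n \<longrightarrow> v < n \<longrightarrow> E\<^sup>*\<^sup>* u v)"

definition degree :: "nat \<Rightarrow> (nat \<Rightarrow> nat \<Rightarrow> bool) \<Rightarrow> nat \<Rightarrow> nat" where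
  "degree n E v = card {u. u < n \<and> E u v}"

definition adj_mat :: "nat \<Rightarrow> (nat \<Rightarrow> nat \<Rightarrow> bool) \<Rightarrow> complex mat" where
  "adj_mat n E = mat n n (\<lambda>(i, j). if E i j then 1 else 0)"

definition graph_spectral_radius :: "nat \<Rightarrow> (nat \<Rightarrow> nat \<Rightarrow> bool) \<Rightarrow> real" where
  "graph_spectral_radius n E = spectral_radius (adj_mat n E)"

definition contains_copy ::
  "nat \<Rightarrow> (nat \<Rightarrow> nat \<Rightarrow> bool) \<Rightarrow> 'b set \<Rightarrow> ('b \<Rightarrow> 'b \<Rightarrow> bool) \<Rightarrow> bool" where
  "contains_copy n E HV HE \<longleftrightarrow>
     (\<exists>f. inj_on f HV \<and> f ` HV \<subseteq> {..<n} \<and> (\<forall>a\<in>HV. \<forall>b\<in>HV. HE a b \<longrightarrow> E (f a) (f b)))"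

text \<open>The graph kS_{l-1} \<union> P_l: star i (i<k) has vertices Inl (i,j), j<l, centre Inl (i,0)
  and leaves Inl (i,j), 1 \<le> j < l (so K_{1,l-1}); the path has vertices Inr p, p<l,
  with edges between consecutive ones.\<close>
definition starsPath_V :: "nat \<Rightarrow> nat \<Rightarrow> ((nat \<times> nat) + nat) set" where
  "starsPath_V k l = Inl ` ({..<k} \<times> {..<l}) \<union> Inr ` {..<l}"

fun starsPath_E :: "nat \<Rightarrow> nat \<Rightarrow> ((nat \<times> nat) + nat) \<Rightarrow> ((nat \<times> nat) + nat) \<Rightarrow> bool" where
  "starsPath_E k l (Inl (i, j)) (Inl (i', j')) =
     (i < k \<and> i = i' \<and> j < l \<and> j' < l \<and> ((j = 0 \<and> j' \<noteq> 0) \<or> (j \<noteq> 0 \<and> j' = 0)))"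
| "starsPath_E k l (Inr p) (Inr q) = (p < l \<and> q < l \<and> (q = p + 1 \<or> p = q + 1))"
| "starsPath_E k l _ _ = False"

definition H_free :: "nat \<Rightarrow> nat \<Rightarrow> nat \<Rightarrow> (nat \<Rightarrow> nat \<Rightarrow> bool) \<Rightarrow> bool" where
  "H_free k l n E \<longleftrightarrow> \<not> contains_copy n E (starsPath_V k l) (starsPath_E k l)"

end

theory Submission
  imports Defs
begin


lemma greedy_embed:
  fixes vs :: "'b list" and par :: "'b \<Rightarrow> 'b option" and rank :: "'b \<Rightarrow> nat"
    and cls :: "'b \<Rightarrow> bool" and P :: "bool \<Rightarrow> nat set" and M :: "bool \<Rightarrow> nat"
    and E :: "nat \<Rightarrow> nat \<Rightarrow> bool"
  assumes "distinct vs" "sorted (map rank vs)"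
    "\<And>b p. b \<in> set vs \<Longrightarrow> par b = Some p \<Longrightarrow> p \<in> set vs \<and> rank p < rank b"
    "\<And>c. finite (P c)"
    "\<And>b. b \<in> set vs \<Longrightarrow> par b = None \<Longrightarrow> M (cls b) \<le> card (P (cls b))"
    "\<And>b p w. b \<in> set vs \<Longrightarrow> par b = Some p \<Longrightarrow> w \<in> P (cls p) \<Longrightarrow> M (cls b) \<le> card {u \<in> P (cls b). E w u}"
    "\<And>b. b \<in> set vs \<Longrightarrow> card {y \<in> set vs. y \<noteq> b \<and> P (cls y) \<inter> P (cls b) \<noteq> {}} < M (cls b)"
  shows "\<exists>g. inj_on g (set vs) \<and> (\<forall>y\<in>set vs. g y \<in> P (cls y)) \<and>
            (\<forall>y\<in>set vs. \<forall>p. par y = Some p \<longrightarrow> E (g p) (g y))"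
  using assms
proof (induction vs rule: rev_induct)
  case Nil
  then show ?case by auto
next
  case (snoc b xs)
  have dxs: "distinct xs" and bnot: "b \<notin> set xs" using snoc.prems(1) by auto
  have sxs: "sorted (map rank xs)" and rb: "\<And>y. y \<in> set xs \<Longrightarrow> rank y \<le> rank b"
    using snoc.prems(2) by (auto simp: sorted_append)
  have par_xs: "p \<in> set xs \<and> rank p < rank y" if "y \<in> set xs" "par y = Some p" for y p
  proof -
    have "p \<in> set (xs @ [b]) \<and> rank p < rank y" using snoc.prems(3)[of y p] that by auto
    moreover have "rank p < rank b" using rb[OF that(1)] calculation by auto
    ultimately show ?thesis by auto
  qed
  have cnt_xs: "card {y \<in> set xs. y \<noteq> b' \<and> P (cls y) \<inter> P (cls b') \<noteq> {}} < M (cls b')"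
    if "b' \<in> set xs" for b'
  proof -
    have "card {y \<in> set xs. y \<noteq> b' \<and> P (cls y) \<inter> P (cls b') \<noteq> {}}
        \<le> card {y \<in> set (xs @ [b]). y \<noteq> b' \<and> P (cls y) \<inter> P (cls b') \<noteq> {}}"
      by (rule card_mono) auto
    also have "\<dots> < M (cls b')" using snoc.prems(7)[of b'] that by auto
    finally show ?thesis .
  qed
  have p5: "M (cls b') \<le> card (P (cls b'))" if "b' \<in> set xs" "par b' = None" for b'
    using snoc.prems(5)[of b'] that by auto
  have p6: "M (cls b') \<le> card {u \<in> P (cls b'). E w u}"
    if "b' \<in> set xs" "par b' = Some p" "w \<in> P (cls p)" for b' p w
    using snoc.prems(6)[of b' p w] that by auto
  have "\<exists>g. inj_on g (set xs) \<and> (\<forall>y\<in>set xs. g y \<in> P (cls y)) \<and>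
            (\<forall>y\<in>set xs. \<forall>p. par y = Some p \<longrightarrow> E (g p) (g y))"
    by (rule snoc.IH[OF dxs sxs par_xs snoc.prems(4) p5 p6 cnt_xs]; assumption)
  then obtain g where g_inj: "inj_on g (set xs)" and g_P: "\<forall>y\<in>set xs. g y \<in> P (cls y)"
    and g_E: "\<forall>y\<in>set xs. \<forall>p. par y = Some p \<longrightarrow> E (g p) (g y)"
    by blast
  define C where "C = {u \<in> P (cls b). case par b of None \<Rightarrow> True | Some p \<Rightarrow> E (g p) u}"
  have finC: "finite C" unfolding C_def using snoc.prems(4) by auto
  have MC: "M (cls b) \<le> card C"
  proof (cases "par b")
    case None
    then show ?thesis using snoc.prems(5)[of b] by (simp add: C_def)
  next
    case (Some p)
    have "p \<in> set xs" using par_xs snoc.prems(3)[of b p] Some bnot by auto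
    then have "g p \<in> P (cls p)" using g_P by auto
    then show ?thesis using snoc.prems(6)[of b p "g p"] Some by (simp add: C_def)
  qed
  define U where "U = g ` {y \<in> set xs. P (cls y) \<inter> P (cls b) \<noteq> {}}"
  have "card U \<le> card {y \<in> set xs. P (cls y) \<inter> P (cls b) \<noteq> {}}"
    unfolding U_def by (rule card_image_le) auto
  also have "\<dots> \<le> card {y \<in> set (xs @ [b]). y \<noteq> b \<and> P (cls y) \<inter> P (cls b) \<noteq> {}}"
    by (rule card_mono) (use bnot in auto)
  also have "\<dots> < M (cls b)" using snoc.prems(7)[of b] by auto
  finally have "card U < card C" using MC by linarith
  moreover have "finite U" unfolding U_def by auto
  ultimately have "\<not> C \<subseteq> U" using card_mono[where A=C and B=U] by linarith
  then obtain u where uC: "u \<in> C" and uU: "u \<notin> U" by auto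
  define g' where "g' = g(b := u)"
  have uP: "u \<in> P (cls b)" using uC C_def by auto
  have u_notin: "u \<notin> g ` set xs"
  proof
    assume "u \<in> g ` set xs"
    then obtain y where y: "y \<in> set xs" "u = g y" by auto
    then have "P (cls y) \<inter> P (cls b) \<noteq> {}" using g_P uP by auto
    then show False using uU y unfolding U_def by auto
  qed
  have eqg: "\<forall>y\<in>set xs. g' y = g y" using bnot g'_def by auto
  have "inj_on g' (set (xs @ [b]))"
  proof -
    have "inj_on g' (set xs)" using g_inj eqg inj_on_cong by fastforce
    moreover have "g' b \<notin> g' ` set xs" using u_notin eqg g'_def by auto
    ultimately show ?thesis by auto
  qed
  moreover have "\<forall>y\<in>set (xs @ [b]). g' y \<in> P (cls y)" using g_P eqg uP g'_def by auto
  moreover have "\<forall>y\<in>set (xs @ [b]). \<forall>p. par y = Some p \<longrightarrow> E (g' p) (g' y)"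
  proof (intro ballI allI impI)
    fix y p assume y: "y \<in> set (xs @ [b])" and py: "par y = Some p"
    show "E (g' p) (g' y)"
    proof (cases "y = b")
      case True
      have "p \<in> set xs" using par_xs snoc.prems(3)[of b p] py True bnot by auto
      then show ?thesis using uC py True eqg g'_def unfolding C_def by auto
    next
      case False
      then have "y \<in> set xs" using y by auto
      then show ?thesis using par_xs[OF _ py] g_E eqg py by auto
    qed
  qed
  ultimately show ?case by blast
qed



fun parH :: "(nat \<times> nat) + nat \<Rightarrow> ((nat \<times> nat) + nat) option" where
  "parH (Inr 0) = None"
| "parH (Inr (Suc p)) = Some (Inr p)"
| "parH (Inl (i, 0)) = None"
| "parH (Inl (i, Suc j)) = Some (Inl (i, 0))"

fun clsH :: "(nat \<times> nat) + nat \<Rightarrow> bool" where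
  "clsH (Inr p) = odd p"
| "clsH (Inl (i, j)) = (j = 0)"

fun rankH :: "(nat \<times> nat) + nat \<Rightarrow> nat" where
  "rankH (Inr p) = p"
| "rankH (Inl (i, j)) = j"

lemma finite_V: "finite (starsPath_V k l)"
  unfolding starsPath_V_def by auto

lemma vsH: "\<exists>vs. set vs = starsPath_V k l \<and> distinct vs \<and> sorted (map rankH vs)"
proof -
  obtain xs where xs: "set xs = starsPath_V k l" "distinct xs"
    using finite_distinct_list[OF finite_V] by blast
  show ?thesis
    by (rule exI[of _ "sort_key rankH xs"]) (simp add: xs sorted_sort_key)
qed

lemma parH_V: "b \<in> starsPath_V k l \<Longrightarrow> parH b = Some p \<Longrightarrow> p \<in> starsPath_V k l \<and> rankH p < rankH b"
proof (induction b rule: parH.induct)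
qed (auto simp: starsPath_V_def)

lemma clsH_par: "parH b = Some p \<Longrightarrow> clsH p \<noteq> clsH b"
  by (induction b rule: parH.induct) auto

lemma simple_sym: "simple_graph n E \<Longrightarrow> E u v \<Longrightarrow> E v u"
  unfolding simple_graph_def by blast

lemma simple_lt: "simple_graph n E \<Longrightarrow> E u v \<Longrightarrow> u < n \<and> v < n \<and> u \<noteq> v"
  unfolding simple_graph_def by blast

lemma copy_from_g:
  assumes G: "simple_graph n E" and inj: "inj_on g (starsPath_V k l)"
    and img: "g ` starsPath_V k l \<subseteq> {..<n}"
    and edges: "\<forall>y\<in>starsPath_V k l. \<forall>p. parH y = Some p \<longrightarrow> E (g p) (g y)"
  shows "contains_copy n E (starsPath_V k l) (starsPath_E k l)"
  unfolding contains_copy_def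
proof (intro exI conjI ballI impI)
  show "inj_on g (starsPath_V k l)" by fact
  show "g ` starsPath_V k l \<subseteq> {..<n}" by fact
  fix a b assume a: "a \<in> starsPath_V k l" and b: "b \<in> starsPath_V k l"
    and ab: "starsPath_E k l a b"
  show "E (g a) (g b)"
  proof (cases a)
    case (Inl ai)
    then obtain i j where ai: "a = Inl (i, j)" by (cases ai) auto
    then obtain j' where bj: "b = Inl (i, j')" and cond: "(j = 0 \<and> j' \<noteq> 0) \<or> (j \<noteq> 0 \<and> j' = 0)"
      using ab by (cases b) auto
    show ?thesis
    proof (cases "j = 0")
      case True
      then obtain j'' where "j' = Suc j''" using cond not0_implies_Suc by blast
      then have "parH b = Some a" using bj ai True by simp
      then show ?thesis using edges b by auto
    next
      case False
      then obtain j'' where "j = Suc j''" using not0_implies_Suc by blast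
      then have "parH a = Some b" using bj ai cond False by simp
      then have "E (g b) (g a)" using edges a by auto
      then show ?thesis using simple_sym[OF G] by blast
    qed
  next
    case (Inr p)
    then obtain q where bq: "b = Inr q" and cond: "q = p + 1 \<or> p = q + 1"
      using ab by (cases b) auto
    show ?thesis
    proof (cases "q = p + 1")
      case True
      then have "parH b = Some a" using bq Inr by simp
      then show ?thesis using edges b by auto
    next
      case False
      then have "parH a = Some b" using bq Inr cond by simp
      then have "E (g b) (g a)" using edges a by auto
      then show ?thesis using simple_sym[OF G] by blast
    qed
  qed
qed

lemma card_V: "card (starsPath_V k l) \<le> k * l + l"
proof -
  have "card (starsPath_V k l) \<le> card (Inl ` ({..<k} \<times> {..<l}) :: ((nat\<times>nat)+nat) set) + card (Inr ` {..<l} :: ((nat\<times>nat)+nat) set)"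
    unfolding starsPath_V_def by (rule card_Un_le)
  also have "\<dots> \<le> card ({..<k} \<times> {..<l}) + card {..<l}"
    by (intro add_mono card_image_le) auto
  finally show ?thesis by (simp add: card_cartesian_product)
qed

lemma card_odd: "card {p. p < l \<and> odd p} = l div 2"
proof -
  have "{p. p < l \<and> odd p} = (\<lambda>j. 2 * j + 1) ` {..<l div 2}"
  proof (intro equalityI subsetI)
    fix p assume "p \<in> {p. p < l \<and> odd p}"
    then have "p = 2 * (p div 2) + 1" "p div 2 < l div 2" by (auto elim!: oddE)
    then show "p \<in> (\<lambda>j. 2 * j + 1) ` {..<l div 2}" by blast
  next
    fix p assume "p \<in> (\<lambda>j. 2 * j + 1) ` {..<l div 2}"
    then show "p \<in> {p. p < l \<and> odd p}" by auto
  qed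
  moreover have "inj_on (\<lambda>j. 2 * j + 1) {..<l div 2}" by (auto simp: inj_on_def)
  ultimately show ?thesis by (simp add: card_image)
qed

lemma card_X: "card {y \<in> starsPath_V k l. clsH y} \<le> k + l div 2"
proof -
  have "{y \<in> starsPath_V k l. clsH y} \<subseteq> (\<lambda>i. Inl (i, 0)) ` {..<k} \<union> Inr ` {p. p < l \<and> odd p}"
    unfolding starsPath_V_def by auto
  then have "card {y \<in> starsPath_V k l. clsH y} \<le> card ((\<lambda>i. Inl (i, 0)) ` {..<k} \<union> Inr ` {p. p < l \<and> odd p} :: ((nat\<times>nat)+nat) set)"
    by (intro card_mono) auto
  also have "\<dots> \<le> card ((\<lambda>i. Inl (i, 0)) ` {..<k} :: ((nat\<times>nat)+nat) set) + card (Inr ` {p. p < l \<and> odd p} :: ((nat\<times>nat)+nat) set)"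
    by (rule card_Un_le)
  also have "\<dots> \<le> card {..<k} + card {p. p < l \<and> odd p}"
    by (intro add_mono card_image_le) auto
  finally show ?thesis using card_odd[of l] by simp
qed

lemma embed_gen:
  assumes G: "simple_graph n E" and T: "T \<subseteq> {..<n}" "T \<noteq> {}"
    and deg: "\<forall>w\<in>T. k * l + l < card {u \<in> T. E w u}"
  shows "contains_copy n E (starsPath_V k l) (starsPath_E k l)"
proof -
  obtain vs where vs: "set vs = starsPath_V k l" "distinct vs" "sorted (map rankH vs)"
    using vsH by blast
  have finT: "finite T" using T finite_subset by blast
  obtain w0 where w0: "w0 \<in> T" using T by auto
  have cT: "k * l + l \<le> card T"
    using deg w0 card_mono[OF finT, of "{u \<in> T. E w0 u}"] by fastforce
  have "\<exists>g. inj_on g (set vs) \<and> (\<forall>y\<in>set vs. g y \<in> (\<lambda>c. T) (clsH y)) \<and>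
            (\<forall>y\<in>set vs. \<forall>p. parH y = Some p \<longrightarrow> E (g p) (g y))"
  proof (rule greedy_embed[where rank=rankH and M="\<lambda>c. k * l + l"])
    show "distinct vs" "sorted (map rankH vs)" by (fact vs)+
    show "\<And>b p. b \<in> set vs \<Longrightarrow> parH b = Some p \<Longrightarrow> p \<in> set vs \<and> rankH p < rankH b"
      using parH_V vs(1) by blast
    show "\<And>c. finite T" by fact
    show "\<And>b. b \<in> set vs \<Longrightarrow> parH b = None \<Longrightarrow> k * l + l \<le> card T" using cT by simp
    show "\<And>b p w. b \<in> set vs \<Longrightarrow> parH b = Some p \<Longrightarrow> w \<in> T \<Longrightarrow> k * l + l \<le> card {u \<in> T. E w u}"
      using deg by fastforce
    show "card {y \<in> set vs. y \<noteq> b \<and> T \<inter> T \<noteq> {}} < k * l + l" if b: "b \<in> set vs" for b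
    proof -
      have "card {y \<in> set vs. y \<noteq> b \<and> T \<inter> T \<noteq> {}} \<le> card (set vs - {b})"
        by (intro card_mono) auto
      also have "\<dots> = card (set vs) - 1" using b by simp
      also have "\<dots> < k * l + l"
      proof -
        have "0 < card (set vs)" using b by (auto simp: card_gt_0_iff)
        moreover have "card (set vs) \<le> k * l + l" using card_V[of k l] vs(1) by simp
        ultimately show ?thesis by linarith
      qed
      finally show ?thesis .
    qed
  qed
  then obtain g where g: "inj_on g (starsPath_V k l)" "\<forall>y\<in>starsPath_V k l. g y \<in> T"
    "\<forall>y\<in>starsPath_V k l. \<forall>p. parH y = Some p \<longrightarrow> E (g p) (g y)"
    unfolding vs(1) by blast
  have "g ` starsPath_V k l \<subseteq> {..<n}" using g(2) T(1) by blast
  then show ?thesis using copy_from_g[OF G g(1) _ g(3)] by blast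
qed

lemma embed_bip:
  assumes G: "simple_graph n E" and k: "k \<ge> 1"
    and A: "A \<subseteq> {..<n}" "A \<noteq> {}" and R: "R \<subseteq> {..<n}" and AR: "A \<inter> R = {}"
    and degA: "\<forall>a\<in>A. k + l div 2 \<le> card {u \<in> R. E a u}"
    and degR: "\<forall>r\<in>R. k * l + l < card {u \<in> A. E r u}"
  shows "contains_copy n E (starsPath_V k l) (starsPath_E k l)"
proof -
  obtain vs where vs: "set vs = starsPath_V k l" "distinct vs" "sorted (map rankH vs)"
    using vsH by blast
  have finA: "finite A" using A finite_subset by blast
  have finR: "finite R" using R finite_subset by blast
  define P where "P = (\<lambda>c. if c then R else A)"
  define M where "M = (\<lambda>c. if c then k + l div 2 else k * l + l + 1)"
  obtain a0 where a0: "a0 \<in> A" using A by auto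
  have cR: "k + l div 2 \<le> card R"
    using degA a0 card_mono[OF finR, of "{u \<in> R. E a0 u}"] by fastforce
  then have "R \<noteq> {}" using k by auto
  then obtain r0 where r0: "r0 \<in> R" by auto
  have cA: "k * l + l + 1 \<le> card A"
    using degR r0 card_mono[OF finA, of "{u \<in> A. E r0 u}"] by fastforce
  have "\<exists>g. inj_on g (set vs) \<and> (\<forall>y\<in>set vs. g y \<in> P (clsH y)) \<and>
            (\<forall>y\<in>set vs. \<forall>p. parH y = Some p \<longrightarrow> E (g p) (g y))"
  proof (rule greedy_embed[where rank=rankH and M=M])
    show "distinct vs" "sorted (map rankH vs)" by (fact vs)+
    show "\<And>b p. b \<in> set vs \<Longrightarrow> parH b = Some p \<Longrightarrow> p \<in> set vs \<and> rankH p < rankH b"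
      using parH_V vs(1) by blast
    show "\<And>c. finite (P c)" using finA finR by (simp add: P_def)
    show "\<And>b. b \<in> set vs \<Longrightarrow> parH b = None \<Longrightarrow> M (clsH b) \<le> card (P (clsH b))"
      using cA cR by (simp add: P_def M_def)
    show "M (clsH b) \<le> card {u \<in> P (clsH b). E w u}"
      if "b \<in> set vs" "parH b = Some p" "w \<in> P (clsH p)" for b p w
    proof -
      have "clsH p \<noteq> clsH b" using clsH_par that(2) by blast
      then show ?thesis using that(3) degA degR by (cases "clsH b") (auto simp: P_def M_def)
    qed
    show "card {y \<in> set vs. y \<noteq> b \<and> P (clsH y) \<inter> P (clsH b) \<noteq> {}} < M (clsH b)"
      if b: "b \<in> set vs" for b
    proof (cases "clsH b")
      case True
      have "{y \<in> set vs. y \<noteq> b \<and> P (clsH y) \<inter> P (clsH b) \<noteq> {}} \<subseteq> {y \<in> starsPath_V k l. clsH y} - {b}"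
        using AR True vs(1) by (auto simp: P_def split: if_splits)
      then have "card {y \<in> set vs. y \<noteq> b \<and> P (clsH y) \<inter> P (clsH b) \<noteq> {}}
          \<le> card ({y \<in> starsPath_V k l. clsH y} - {b})"
        by (intro card_mono) (auto simp: finite_V)
      also have "\<dots> = card {y \<in> starsPath_V k l. clsH y} - 1"
        using b True vs(1) finite_V by (simp)
      also have "\<dots> < k + l div 2" using card_X[of k l] k by linarith
      finally show ?thesis using True by (simp add: M_def)
    next
      case False
      have "card {y \<in> set vs. y \<noteq> b \<and> P (clsH y) \<inter> P (clsH b) \<noteq> {}} \<le> card (set vs)"
        by (intro card_mono) auto
      also have "\<dots> < k * l + l + 1" using card_V[of k l] vs(1) by simp
      finally show ?thesis using False by (simp add: M_def)
    qed
  qed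
  then obtain g where g: "inj_on g (starsPath_V k l)" "\<forall>y\<in>starsPath_V k l. g y \<in> P (clsH y)"
    "\<forall>y\<in>starsPath_V k l. \<forall>p. parH y = Some p \<longrightarrow> E (g p) (g y)"
    unfolding vs(1) by blast
  have "g ` starsPath_V k l \<subseteq> {..<n}" using g(2) A R by (auto simp: P_def split: if_splits)
  then show ?thesis using copy_from_g[OF G g(1) _ g(3)] by blast
qed



lemma card_filter_sum: "finite A \<Longrightarrow> card {x \<in> A. P x} = (\<Sum>x\<in>A. if P x then 1 else 0)"
  by (simp add: sum.If_cases Int_def)

lemma card_remove_split:
  assumes "finite T" "w \<in> T"
  shows "card {u \<in> T. E x u} = card {u \<in> T - {w}. E x u} + (if E x w then 1 else 0)"
proof (cases "E x w")
  case True
  have "{u \<in> T. E x u} = insert w {u \<in> T - {w}. E x u}" using assms True by auto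
  then show ?thesis using assms True by (simp add: card_insert_disjoint)
next
  case False
  have "{u \<in> T. E x u} = {u \<in> T - {w}. E x u}" using False by auto
  then show ?thesis using False by simp
qed

lemma nbr_sym_set:
  assumes G: "simple_graph n E" and w: "w \<in> T"
  shows "{x \<in> T - {w}. E x w} = {u \<in> T. E w u}"
  using simple_sym[OF G] simple_lt[OF G] w by blast

lemma peel_gen:
  assumes G: "simple_graph n E" and free: "H_free k l n E"
  shows "T \<subseteq> {..<n} \<Longrightarrow> (\<Sum>w\<in>T. card {u \<in> T. E w u}) \<le> 2 * (k * l + l) * card T"
proof (induction "card T" arbitrary: T rule: less_induct)
  case less
  have finT: "finite T" using less.prems finite_subset by blast
  show ?case
  proof (cases "\<exists>w\<in>T. card {u \<in> T. E w u} \<le> k * l + l")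
    case True
    then obtain w where w: "w \<in> T" "card {u \<in> T. E w u} \<le> k * l + l" by blast
    define T' where "T' = T - {w}"
    have cT': "card T' = card T - 1" using w finT T'_def by simp
    have lt: "card T' < card T" using T'_def card_Diff1_less[OF finT w(1)] by simp
    have sub: "T' \<subseteq> {..<n}" using less.prems T'_def by auto
    have IH: "(\<Sum>x\<in>T'. card {u \<in> T'. E x u}) \<le> 2 * (k * l + l) * card T'"
      using less(1)[OF lt sub] .
    have s1: "(\<Sum>x\<in>T. card {u \<in> T. E x u}) = card {u \<in> T. E w u} + (\<Sum>x\<in>T'. card {u \<in> T. E x u})"
      using sum.remove[OF finT w(1)] T'_def by simp
    have s2: "(\<Sum>x\<in>T'. card {u \<in> T. E x u}) = (\<Sum>x\<in>T'. card {u \<in> T'. E x u}) + (\<Sum>x\<in>T'. if E x w then 1 else 0)"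
    proof -
      have eq: "\<And>x. card {u \<in> T. E x u} = card {u \<in> T'. E x u} + (if E x w then 1 else 0)"
        unfolding T'_def by (rule card_remove_split[OF finT w(1)])
      show ?thesis by (simp only: eq sum.distrib)
    qed
    have s3: "(\<Sum>x\<in>T'. if E x w then 1 else 0) = card {u \<in> T. E w u}"
      using card_filter_sum[of T' "\<lambda>x. E x w"] nbr_sym_set[OF G w(1)] finT T'_def by simp
    have "card T \<ge> 1" using w finT card_0_eq by fastforce
    then have "2 * (k * l + l) * card T = 2 * (k * l + l) + 2 * (k * l + l) * card T'"
      using cT' by (metis Suc_diff_le diff_Suc_1 mult_Suc_right)
    moreover have "(\<Sum>x\<in>T. card {u \<in> T. E x u}) = (\<Sum>x\<in>T'. card {u \<in> T'. E x u}) + 2 * card {u \<in> T. E w u}"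
      using s1 s2 s3 by simp
    moreover have "2 * card {u \<in> T. E w u} \<le> 2 * (k * l + l)" using w(2) by simp
    ultimately show ?thesis using add_mono[OF IH, of "2 * card {u \<in> T. E w u}" "2 * (k * l + l)"]
      by simp
  next
    case False
    show ?thesis
    proof (cases "T = {}")
      case True then show ?thesis by simp
    next
      case ne: False
      have "contains_copy n E (starsPath_V k l) (starsPath_E k l)"
        using embed_gen[OF G less.prems ne] False by (auto simp: not_le)
      then show ?thesis using free unfolding H_free_def by blast
    qed
  qed
qed

lemma peel_bip:
  assumes G: "simple_graph n E" and free: "H_free k l n E" and k: "k \<ge> 1"
  shows "A \<subseteq> {..<n} \<Longrightarrow> R \<subseteq> {..<n} \<Longrightarrow> A \<inter> R = {} \<Longrightarrow>
    (\<Sum>a\<in>A. card {u \<in> R. E a u}) \<le> (k + l div 2 - 1) * card A + (k * l + l) * card R"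
proof (induction "card A + card R" arbitrary: A R rule: less_induct)
  case less
  have finA: "finite A" using less.prems finite_subset by blast
  have finR: "finite R" using less.prems finite_subset by blast
  show ?case
  proof (cases "\<exists>a\<in>A. card {u \<in> R. E a u} \<le> k + l div 2 - 1")
    case True
    then obtain a where a: "a \<in> A" "card {u \<in> R. E a u} \<le> k + l div 2 - 1" by blast
    define A' where "A' = A - {a}"
    have cA': "card A' = card A - 1" using a finA A'_def by simp
    have lt: "card A' + card R < card A + card R" using A'_def card_Diff1_less[OF finA a(1)] by simp
    have IH: "(\<Sum>x\<in>A'. card {u \<in> R. E x u}) \<le> (k + l div 2 - 1) * card A' + (k * l + l) * card R"
      using less(1)[OF lt] less.prems A'_def by auto
    have s1: "(\<Sum>x\<in>A. card {u \<in> R. E x u}) = card {u \<in> R. E a u} + (\<Sum>x\<in>A'. card {u \<in> R. E x u})"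
      using sum.remove[OF finA a(1)] A'_def by simp
    have "card A \<ge> 1" using a finA card_0_eq by fastforce
    then have "(k + l div 2 - 1) * card A = (k + l div 2 - 1) + (k + l div 2 - 1) * card A'"
      using cA' by (metis Suc_diff_le diff_Suc_1 mult_Suc_right)
    then show ?thesis using s1 IH a(2) by linarith
  next
    case notA: False
    show ?thesis
    proof (cases "\<exists>r\<in>R. card {u \<in> A. E r u} \<le> k * l + l")
      case True
      then obtain r where r: "r \<in> R" "card {u \<in> A. E r u} \<le> k * l + l" by blast
      define R' where "R' = R - {r}"
      have cR': "card R' = card R - 1" using r finR R'_def by simp
      have lt: "card A + card R' < card A + card R" using R'_def card_Diff1_less[OF finR r(1)] by simp
      have IH: "(\<Sum>x\<in>A. card {u \<in> R'. E x u}) \<le> (k + l div 2 - 1) * card A + (k * l + l) * card R'"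
        using less(1)[OF lt] less.prems R'_def by auto
      have s2: "(\<Sum>x\<in>A. card {u \<in> R. E x u}) = (\<Sum>x\<in>A. card {u \<in> R'. E x u}) + (\<Sum>x\<in>A. if E x r then 1 else 0)"
      proof -
        have eq: "\<And>x. card {u \<in> R. E x u} = card {u \<in> R'. E x u} + (if E x r then 1 else 0)"
          unfolding R'_def by (rule card_remove_split[OF finR r(1)])
        show ?thesis by (simp only: eq sum.distrib)
      qed
      have "{x \<in> A. E x r} = {u \<in> A. E r u}" using simple_sym[OF G] by blast
      then have s3: "(\<Sum>x\<in>A. if E x r then 1 else 0) = card {u \<in> A. E r u}"
        using card_filter_sum[of A "\<lambda>x. E x r"] finA by simp
      have "card R \<ge> 1" using r finR card_0_eq by fastforce
      then have "(k * l + l) * card R = (k * l + l) + (k * l + l) * card R'"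
        using cR' by (metis Suc_diff_le diff_Suc_1 mult_Suc_right)
      then show ?thesis using s2 s3 IH r(2) by linarith
    next
      case notR: False
      show ?thesis
      proof (cases "A = {}")
        case True then show ?thesis by simp
      next
        case ne: False
        have dA: "\<forall>a\<in>A. k + l div 2 \<le> card {u \<in> R. E a u}"
        proof
          fix a assume "a \<in> A"
          then have "\<not> card {u \<in> R. E a u} \<le> k + l div 2 - 1" using notA by blast
          then show "k + l div 2 \<le> card {u \<in> R. E a u}" using k by arith
        qed
        have dR: "\<forall>r\<in>R. k * l + l < card {u \<in> A. E r u}" using notR by (auto simp: not_le)
        have "contains_copy n E (starsPath_V k l) (starsPath_E k l)"
          by (rule embed_bip[OF G k less.prems(1) ne less.prems(2) less.prems(3) dA dR])
        then show ?thesis using free unfolding H_free_def by blast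
      qed
    qed
  qed
qed

lemma edge_ST:
  assumes G: "simple_graph n E" and free: "H_free k l n E" and k: "k \<ge> 1"
    and S: "S \<subseteq> {..<n}" and T: "T \<subseteq> {..<n}"
  shows "(\<Sum>u\<in>S. card {w \<in> T. E u w}) \<le> (k + l div 2 - 1) * card S + 3 * (k * l + l) * card T"
proof -
  have finS: "finite S" using S finite_subset by blast
  have finT: "finite T" using T finite_subset by blast
  have "(\<Sum>u\<in>S. card {w \<in> T. E u w}) = (\<Sum>u\<in>S \<inter> T. card {w \<in> T. E u w}) + (\<Sum>u\<in>S - T. card {w \<in> T. E u w})"
    using sum.Int_Diff[OF finS] by blast
  moreover have "(\<Sum>u\<in>S - T. card {w \<in> T. E u w}) \<le> (k + l div 2 - 1) * card (S - T) + (k * l + l) * card T"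
    using peel_bip[OF G free k, of "S - T" T] S T by auto
  moreover have "(k + l div 2 - 1) * card (S - T) \<le> (k + l div 2 - 1) * card S"
    using finS by (intro mult_le_mono2) (simp add: card_mono)
  moreover have "(\<Sum>u\<in>S \<inter> T. card {w \<in> T. E u w}) \<le> (\<Sum>u\<in>T. card {w \<in> T. E u w})"
    by (rule sum_mono2[OF finT]) auto
  moreover have "(\<Sum>u\<in>T. card {w \<in> T. E u w}) \<le> 2 * (k * l + l) * card T"
    using peel_gen[OF G free T] .
  moreover have "3 * (k * l + l) * card T = (k * l + l) * card T + 2 * (k * l + l) * card T"
    by (simp add: algebra_simps)
  ultimately show ?thesis by linarith
qed



lemma dcount:
  assumes "finite S" "finite T" "\<And>u v. E u v \<Longrightarrow> E v u"
  shows "(\<Sum>w\<in>T. card {u \<in> S. E w u}) = (\<Sum>u\<in>S. card {w \<in> T. E u w})"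
proof -
  have sym: "\<And>u w. E w u = E u w" using assms(3) by blast
  have "(\<Sum>w\<in>T. card {u \<in> S. E w u}) = (\<Sum>w\<in>T. \<Sum>u\<in>S. if E w u then 1 else 0)"
    by (rule sum.cong[OF refl], rule card_filter_sum[OF assms(1)])
  also have "\<dots> = (\<Sum>u\<in>S. \<Sum>w\<in>T. if E w u then 1 else 0)" by (rule sum.swap)
  also have "\<dots> = (\<Sum>u\<in>S. \<Sum>w\<in>T. if E u w then 1 else 0)" by (simp only: sym)
  also have "\<dots> = (\<Sum>u\<in>S. card {w \<in> T. E u w})"
    by (rule sum.cong[OF refl], rule card_filter_sum[OF assms(2), symmetric])
  finally show ?thesis .
qed

lemma walk:
  fixes y :: "nat \<Rightarrow> real"
  assumes G: "simple_graph n E" and S: "S \<subseteq> {..<n}"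
  shows "(\<Sum>u\<in>S. \<Sum>w\<in>{w. w < n \<and> E u w}. y w) = (\<Sum>w<n. real (card {u \<in> S. E w u}) * y w)"
proof -
  have finS: "finite S" using S finite_subset by blast
  have "(\<Sum>u\<in>S. \<Sum>w\<in>{w. w < n \<and> E u w}. y w) = (\<Sum>u\<in>S. \<Sum>w<n. if E u w then y w else 0)"
  proof (rule sum.cong[OF refl])
    fix u
    have eq: "{w. w < n \<and> E u w} = {w \<in> {..<n}. E u w}" by auto
    show "(\<Sum>w\<in>{w. w < n \<and> E u w}. y w) = (\<Sum>w<n. if E u w then y w else 0)"
      by (subst eq) (rule sum.inter_filter, simp)
  qed
  also have "\<dots> = (\<Sum>w<n. \<Sum>u\<in>S. if E u w then y w else 0)" by (rule sum.swap)
  also have "\<dots> = (\<Sum>w<n. real (card {u \<in> S. E w u}) * y w)"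
  proof (rule sum.cong[OF refl])
    fix w
    have "(\<Sum>u\<in>S. if E u w then y w else 0) = (\<Sum>u\<in>{u \<in> S. E u w}. y w)"
      by (rule sum.inter_filter[OF finS, symmetric])
    also have "{u \<in> S. E u w} = {u \<in> S. E w u}" using simple_sym[OF G] by blast
    finally show "(\<Sum>u\<in>S. if E u w then y w else 0) = real (card {u \<in> S. E w u}) * y w"
      by simp
  qed
  finally show ?thesis .
qed

lemma weighted:
  fixes y :: "nat \<Rightarrow> real"
  assumes G: "simple_graph n E" and free: "H_free k l n E" and k: "k \<ge> 1"
    and S: "S \<subseteq> {..<n}" and y: "\<And>w. w < n \<Longrightarrow> 0 \<le> y w \<and> y w \<le> 1"
  shows "(\<Sum>w<n. real (card {u \<in> S. E w u}) * y w)
     \<le> real (k + l div 2 - 1) * real (card S) + 3 * real (k * l + l) * (\<Sum>w<n. y w)"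
proof -
  obtain hN where hN: "hN = k + l div 2 - 1" by blast
  define c where "c = (\<lambda>w. real (card {u \<in> S. E w u}))"
  define FF where "FF = 3 * real (k * l + l)"
  define T where "T = {w. w < n \<and> c w > FF}"
  have T: "T \<subseteq> {..<n}" unfolding T_def by auto
  have finS: "finite S" using S finite_subset by blast
  have finT: "finite T" using T finite_subset by blast
  have pt: "c w * y w \<le> FF * y w + (if w \<in> T then c w - FF else 0)" if w: "w < n" for w
  proof (cases "w \<in> T")
    case True
    then have "c w - FF > 0" unfolding T_def by auto
    then have "(c w - FF) * y w \<le> (c w - FF) * 1" using y[OF w] by (intro mult_left_mono) auto
    then show ?thesis using True by (simp add: algebra_simps)
  next
    case False
    then have "c w \<le> FF" using w unfolding T_def by auto
    then have "c w * y w \<le> FF * y w" using y[OF w] by (intro mult_right_mono) auto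
    then show ?thesis using False by simp
  qed
  have "(\<Sum>w<n. c w * y w) \<le> (\<Sum>w<n. FF * y w + (if w \<in> T then c w - FF else 0))"
    by (rule sum_mono) (use pt in auto)
  also have "\<dots> = FF * (\<Sum>w<n. y w) + (\<Sum>w<n. if w \<in> T then c w - FF else 0)"
    by (simp add: sum.distrib sum_distrib_left)
  also have "(\<Sum>w<n. if w \<in> T then c w - FF else 0) = (\<Sum>w\<in>T. c w - FF)"
  proof -
    have eq: "T = {w \<in> {..<n}. w \<in> T}" using T by auto
    show ?thesis by (subst eq) (rule sum.inter_filter[symmetric], simp)
  qed
  also have "\<dots> = (\<Sum>w\<in>T. c w) - FF * real (card T)" by (simp add: sum_subtractf)
  also have "(\<Sum>w\<in>T. c w) = real (\<Sum>w\<in>T. card {u \<in> S. E w u})" unfolding c_def by simp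
  also have "(\<Sum>w\<in>T. card {u \<in> S. E w u}) = (\<Sum>u\<in>S. card {w \<in> T. E u w})"
    by (rule dcount[OF finS finT]) (use simple_sym[OF G] in blast)
  also have "\<dots> \<le> hN * card S + 3 * (k * l + l) * card T"
    using edge_ST[OF G free k S T] hN by simp
  finally have "(\<Sum>w<n. c w * y w) \<le> FF * (\<Sum>w<n. y w) +
      (real (hN * card S + 3 * (k * l + l) * card T) - FF * real (card T))"
    by simp
  then show ?thesis unfolding c_def FF_def hN[symmetric] by (simp add: algebra_simps)
qed



lemma spec_lower:
  assumes h0: "0 < h" and hn: "h < n"
  shows "sqrt (real h * real (n - h)) \<le> graph_spectral_radius n (\<lambda>i j. i < n \<and> j < n \<and> (i < h) \<noteq> (j < h))"
proof -
  define E' where "E' = (\<lambda>i j. i < n \<and> j < n \<and> (i < h) \<noteq> (j < h))"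
  define A where "A = adj_mat n E'"
  have A: "A \<in> carrier_mat n n" unfolding A_def adj_mat_def by simp
  define a where "a = sqrt (real (n - h))"
  define b where "b = sqrt (real h)"
  have aa: "a * a = real (n - h)" unfolding a_def by simp
  have bb: "b * b = real h" unfolding b_def by simp
  have apos: "a > 0" unfolding a_def using hn by simp
  have bpos: "b > 0" unfolding b_def using h0 by simp
  define f where "f = (\<lambda>j. if j < h then a else b)"
  define v where "v = vec n (\<lambda>j. complex_of_real (f j))"
  define lam where "lam = complex_of_real (a * b)"
  have rowsum: "(\<Sum>j\<in>{0..<n}. (if E' i j then 1 else 0) * f j) = a * b * f i" if i: "i < n" for i
  proof (cases "i < h")
    case True
    have "(\<Sum>j\<in>{0..<n}. (if E' i j then 1 else 0) * f j) = (\<Sum>j\<in>{0..<n}. if h \<le> j then b else 0)"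
      by (rule sum.cong[OF refl]) (use True i in \<open>auto simp: E'_def f_def\<close>)
    also have "\<dots> = (\<Sum>j\<in>{j \<in> {0..<n}. h \<le> j}. b)" by (rule sum.inter_filter[symmetric]) simp
    also have "{j \<in> {0..<n}. h \<le> j} = {h..<n}" by auto
    also have "(\<Sum>j\<in>{h..<n}. b) = real (n - h) * b" by simp
    finally show ?thesis using True aa by (simp add: f_def algebra_simps)
  next
    case False
    have "(\<Sum>j\<in>{0..<n}. (if E' i j then 1 else 0) * f j) = (\<Sum>j\<in>{0..<n}. if j < h then a else 0)"
      by (rule sum.cong[OF refl]) (use False i in \<open>auto simp: E'_def f_def\<close>)
    also have "\<dots> = (\<Sum>j\<in>{j \<in> {0..<n}. j < h}. a)" by (rule sum.inter_filter[symmetric]) simp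
    also have "{j \<in> {0..<n}. j < h} = {0..<h}" using hn by auto
    also have "(\<Sum>j\<in>{0..<h}. a) = real h * a" by simp
    finally show ?thesis using False bb by (simp add: f_def algebra_simps)
  qed
  have Av: "A *\<^sub>v v = lam \<cdot>\<^sub>v v"
  proof (rule eq_vecI)
    show "dim_vec (A *\<^sub>v v) = dim_vec (lam \<cdot>\<^sub>v v)" using A by (simp add: v_def)
  next
    fix i assume "i < dim_vec (lam \<cdot>\<^sub>v v)"
    then have i: "i < n" by (simp add: v_def)
    have "(A *\<^sub>v v) $ i = row A i \<bullet> v" using A i by simp
    also have "\<dots> = (\<Sum>j\<in>{0..<n}. A $$ (i, j) * v $ j)"
    proof -
      have dc: "dim_col A = n" "dim_row A = n" using A by auto
      show ?thesis unfolding scalar_prod_def by (intro sum.cong) (use i in \<open>auto simp: v_def dc\<close>)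
    qed
    also have "\<dots> = (\<Sum>j\<in>{0..<n}. complex_of_real ((if E' i j then 1 else 0) * f j))"
      by (rule sum.cong[OF refl]) (use i in \<open>simp add: A_def adj_mat_def v_def\<close>)
    also have "\<dots> = complex_of_real (\<Sum>j\<in>{0..<n}. (if E' i j then 1 else 0) * f j)" by simp
    also have "\<dots> = complex_of_real (a * b * f i)" using rowsum[OF i] by simp
    also have "\<dots> = (lam \<cdot>\<^sub>v v) $ i" using i by (simp add: lam_def v_def)
    finally show "(A *\<^sub>v v) $ i = (lam \<cdot>\<^sub>v v) $ i" .
  qed
  have n0: "0 < n" using hn by simp
  have v0: "v \<noteq> 0\<^sub>v n"
  proof
    assume "v = 0\<^sub>v n"
    then have "v $ 0 = 0" using n0 by simp
    then show False using n0 h0 apos by (simp add: v_def f_def)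
  qed
  have "eigenvector A v lam" unfolding eigenvector_def using A Av v0 by (simp add: v_def)
  then have "lam \<in> spectrum A" unfolding spectrum_def eigenvalue_def by auto
  then have "norm lam \<le> spectral_radius A" using spectral_radius_mem_max(2)[OF A n0] by auto
  moreover have "norm lam = sqrt (real h * real (n - h))"
  proof -
    have "norm lam = \<bar>a * b\<bar>" unfolding lam_def by (simp only: norm_of_real)
    also have "\<dots> = a * b" using apos bpos by simp
    also have "\<dots> = sqrt (real h * real (n - h))" unfolding a_def b_def
      by (simp add: real_sqrt_mult mult.commute)
    finally show ?thesis .
  qed
  ultimately show ?thesis unfolding graph_spectral_radius_def A_def E'_def by simp
qed

lemma K_simple: "simple_graph n (\<lambda>i j. i < n \<and> j < n \<and> (i < h) \<noteq> (j < h))"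
  unfolding simple_graph_def by auto

lemma K_free:
  assumes k: "k \<ge> 1" and l: "l \<ge> 2" and h: "h = k + l div 2 - 1"
  shows "H_free k l n (\<lambda>i j. i < n \<and> j < n \<and> (i < h) \<noteq> (j < h))"
  unfolding H_free_def contains_copy_def
proof (rule notI)
  assume "\<exists>f. inj_on f (starsPath_V k l) \<and> f ` starsPath_V k l \<subseteq> {..<n} \<and>
    (\<forall>a\<in>starsPath_V k l. \<forall>b\<in>starsPath_V k l. starsPath_E k l a b \<longrightarrow>
       (f a < n \<and> f b < n \<and> (f a < h) \<noteq> (f b < h)))"
  then obtain g where g_inj: "inj_on g (starsPath_V k l)"
    and g_E: "\<forall>a\<in>starsPath_V k l. \<forall>b\<in>starsPath_V k l. starsPath_E k l a b \<longrightarrow>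
       (g a < n \<and> g b < n \<and> (g a < h) \<noteq> (g b < h))" by blast
  define e1 :: "nat + nat \<Rightarrow> (nat \<times> nat) + nat" where
    "e1 = (\<lambda>m. case m of Inl i \<Rightarrow> Inl (i, 0) | Inr j \<Rightarrow> Inr (2 * j))"
  define e2 :: "nat + nat \<Rightarrow> (nat \<times> nat) + nat" where
    "e2 = (\<lambda>m. case m of Inl i \<Rightarrow> Inl (i, 1) | Inr j \<Rightarrow> Inr (2 * j + 1))"
  define M :: "(nat + nat) set" where "M = Inl ` {..<k} \<union> Inr ` {..<l div 2}"
  have eV: "e1 m \<in> starsPath_V k l \<and> e2 m \<in> starsPath_V k l \<and> starsPath_E k l (e1 m) (e2 m)"
    if m: "m \<in> M" for m
  proof (cases m)
    case (Inl i)
    then have "i < k" using m by (auto simp: M_def)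
    then show ?thesis using Inl l by (auto simp: e1_def e2_def starsPath_V_def)
  next
    case (Inr j)
    then have "j < l div 2" using m by (auto simp: M_def)
    then have "2 * j < l" "2 * j + 1 < l" by auto
    then show ?thesis using Inr by (auto simp: e1_def e2_def starsPath_V_def)
  qed
  define sel where "sel = (\<lambda>m. if g (e1 m) < h then e1 m else e2 m)"
  have selV: "sel m \<in> starsPath_V k l" if "m \<in> M" for m
    using eV[OF that] by (simp add: sel_def)
  have sel_lt: "g (sel m) < h" if "m \<in> M" for m
    using eV[OF that] g_E by (auto simp: sel_def)
  define unsel :: "(nat \<times> nat) + nat \<Rightarrow> nat + nat" where
    "unsel = (\<lambda>x. case x of Inl (i, j) \<Rightarrow> Inl i | Inr p \<Rightarrow> Inr (p div 2))"
  have unsel_sel: "unsel (sel m) = m" for m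
    by (cases m) (auto simp: sel_def unsel_def e1_def e2_def)
  have inj: "inj_on (g \<circ> sel) M"
  proof (rule inj_onI)
    fix m m' assume m: "m \<in> M" and m': "m' \<in> M" and eq: "(g \<circ> sel) m = (g \<circ> sel) m'"
    then have "sel m = sel m'" using g_inj selV[OF m] selV[OF m'] by (auto dest: inj_onD)
    then show "m = m'" using unsel_sel by metis
  qed
  have sub: "(g \<circ> sel) ` M \<subseteq> {..<h}" using sel_lt by auto
  have "card M \<le> card {..<h}" by (rule card_inj_on_le[OF inj sub]) simp
  moreover have "card M = k + l div 2"
  proof -
    have "card M = card (Inl ` {..<k} :: (nat + nat) set) + card (Inr ` {..<l div 2} :: (nat + nat) set)"
      unfolding M_def by (rule card_Un_disjoint) auto
    also have "\<dots> = k + l div 2" by (simp add: card_image)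
    finally show ?thesis .
  qed
  ultimately show False using h k by simp
qed



lemma nbig:
  fixes N hh t \<alpha> FF :: real
  assumes hh2: "hh \<ge> 2" and FF1: "FF \<ge> 1" and tF: "t \<ge> 3*FF"
    and al: "\<alpha> = 1/(2*(hh+1)*t^2)" and Nl: "N \<ge> t^2/\<alpha>^3"
  shows "N \<ge> 4*hh"
proof -
  have t3: "t \<ge> 3" using tF FF1 by linarith
  define D where "D = 2*(hh+1)*t^2"
  have t2: "t^2 \<ge> 9"
  proof -
    have "3*3 \<le> t*t" using t3 by (intro mult_mono) auto
    then show ?thesis by (simp add: power2_eq_square)
  qed
  have D2: "D \<ge> 2"
  proof -
    have "2*(hh+1) \<ge> 1" using hh2 by simp
    then have "2*(hh+1)*t^2 \<ge> 1 * 9" using t2 by (intro mult_mono) auto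
    then show ?thesis unfolding D_def by simp
  qed
  have aD: "\<alpha> * D = 1" using al D2 hh2 t3 unfolding D_def by simp
  have apos: "\<alpha> > 0" using al D2 unfolding D_def by simp
  have a1: "\<alpha> \<le> 1/2"
  proof -
    have "\<alpha> * 2 \<le> \<alpha> * D" using D2 apos by (intro mult_left_mono) auto
    then show ?thesis using aD by simp
  qed
  define R0 where "R0 = t / \<alpha>"
  have R0eq: "R0 = D * t" unfolding R0_def using aD apos by (simp add: field_simps)
  have R0ge: "R0 \<ge> 4*hh"
  proof -
    have "2*(hh+1)*t^2 \<ge> 2*(hh+1)*1" using t2 hh2 by (intro mult_left_mono) auto
    then have "D \<ge> 2*(hh+1)" unfolding D_def by simp
    then have "D * t \<ge> (2*(hh+1)) * 3" using t3 hh2 by (intro mult_mono) auto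
    then have "R0 \<ge> 6*hh + 6" unfolding R0eq by (simp add: algebra_simps)
    then show ?thesis using hh2 by linarith
  qed
  have Nge: "N \<ge> R0^2"
  proof -
    have "\<alpha>^3 \<le> \<alpha>^2" using apos a1 by (simp add: power_decreasing)
    then have "t^2/\<alpha>^2 \<le> t^2/\<alpha>^3" using apos by (intro divide_left_mono) auto
    then show ?thesis using Nl unfolding R0_def by (simp add: power_divide)
  qed
  have R01: "R0 \<ge> 1" using R0ge hh2 by linarith
  have "R0^2 \<ge> R0" using R01 by (simp add: power2_eq_square)
  then have N4: "N \<ge> 4*hh" using Nge R0ge by linarith
  then show ?thesis .
qed

lemma numeric:
  fixes \<rho> Y yv s N hh t \<alpha> FF :: real
  assumes hh2: "hh \<ge> 2" and FF1: "FF \<ge> 1" and tF: "t \<ge> 3*FF"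
    and al: "\<alpha> = 1/(2*(hh+1)*t^2)" and Nl: "N \<ge> t^2/\<alpha>^3"
    and rho0: "\<rho> \<ge> 0" and rho2: "\<rho>^2 \<ge> hh*(N-hh)"
    and Yb: "\<rho>*Y \<le> hh*N + 3*FF*Y" and Y0: "Y \<ge> 0"
    and main: "\<rho>^2*yv \<le> hh*s + 3*FF*Y" and yv: "yv > 4*\<alpha>" and sb: "s \<le> \<alpha>*N/3"
  shows False
proof -
  have t3: "t \<ge> 3" using tF FF1 by linarith
  define D where "D = 2*(hh+1)*t^2"
  have t2: "t^2 \<ge> 9"
  proof -
    have "3*3 \<le> t*t" using t3 by (intro mult_mono) auto
    then show ?thesis by (simp add: power2_eq_square)
  qed
  have D2: "D \<ge> 2"
  proof -
    have "2*(hh+1) \<ge> 1" using hh2 by simp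
    then have "2*(hh+1)*t^2 \<ge> 1 * 9" using t2 by (intro mult_mono) auto
    then show ?thesis unfolding D_def by simp
  qed
  have aD: "\<alpha> * D = 1" using al D2 hh2 t3 unfolding D_def by simp
  have apos: "\<alpha> > 0" using al D2 unfolding D_def by simp
  have a1: "\<alpha> \<le> 1/2"
  proof -
    have "\<alpha> * 2 \<le> \<alpha> * D" using D2 apos by (intro mult_left_mono) auto
    then show ?thesis using aD by simp
  qed
  define R0 where "R0 = t / \<alpha>"
  have R0eq: "R0 = D * t" unfolding R0_def using aD apos by (simp add: field_simps)
  have R0ge: "R0 \<ge> 4*hh"
  proof -
    have "2*(hh+1)*t^2 \<ge> 2*(hh+1)*1" using t2 hh2 by (intro mult_left_mono) auto
    then have "D \<ge> 2*(hh+1)" unfolding D_def by simp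
    then have "D * t \<ge> (2*(hh+1)) * 3" using t3 hh2 by (intro mult_mono) auto
    then have "R0 \<ge> 6*hh + 6" unfolding R0eq by (simp add: algebra_simps)
    then show ?thesis using hh2 by linarith
  qed
  have Nge: "N \<ge> R0^2"
  proof -
    have "\<alpha>^3 \<le> \<alpha>^2" using apos a1 by (simp add: power_decreasing)
    then have "t^2/\<alpha>^2 \<le> t^2/\<alpha>^3" using apos by (intro divide_left_mono) auto
    then show ?thesis using Nl unfolding R0_def by (simp add: power_divide)
  qed
  have R01: "R0 \<ge> 1" using R0ge hh2 by linarith
  have "R0^2 \<ge> R0" using R01 by (simp add: power2_eq_square)
  then have N4: "N \<ge> 4*hh" using Nge R0ge by linarith
  have rhoN: "\<rho>^2 \<ge> R0^2"
  proof -
    have "(hh-1)*N \<ge> (hh-1)*(4*hh)" using N4 hh2 by (intro mult_left_mono) auto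
    moreover have "(hh-1)*(4*hh) \<ge> hh*hh" using hh2 by (simp add: algebra_simps)
    ultimately have "hh*(N-hh) \<ge> N" by (simp add: algebra_simps)
    then show ?thesis using rho2 Nge by linarith
  qed
  have rhoR: "\<rho> \<ge> R0" using rhoN rho0 by (rule power2_le_imp_le)
  have R0F: "\<alpha> * R0 = t" unfolding R0_def using apos by simp
  have arho: "\<alpha> * \<rho> \<ge> 3*FF" using mult_left_mono[OF rhoR, of \<alpha>] apos R0F tF by linarith
  have rho6: "\<rho> \<ge> 6*FF"
  proof -
    have "\<alpha> * \<rho> \<le> (1/2) * \<rho>" using a1 rho0 by (intro mult_right_mono) auto
    then show ?thesis using arho by linarith
  qed
  have rpos: "\<rho> > 0" using rho6 FF1 by linarith
  have rY: "\<rho>*Y \<le> 2*hh*N"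
  proof -
    have "(\<rho>/2)*Y \<le> (\<rho> - 3*FF)*Y" using rho6 Y0 by (intro mult_right_mono) auto
    then show ?thesis using Yb by (simp add: algebra_simps)
  qed
  have hNpos: "hh*N > 0" using hh2 N4 by simp
  have L: "\<rho>*(\<rho>^2*yv) \<le> \<rho>*(hh*s) + 3*FF*(\<rho>*Y)"
    using mult_left_mono[OF main rho0] by (simp add: algebra_simps)
  have L2: "\<rho>*(hh*s) \<le> \<rho>*(hh*(\<alpha>*N/3))" using sb rho0 hh2 by (intro mult_left_mono) auto
  have L3: "3*FF*(\<rho>*Y) \<le> 3*FF*(2*hh*N)" using rY FF1 by (intro mult_left_mono) auto
  have "\<rho>^2*yv > \<rho>^2*(4*\<alpha>)" using yv rpos by simp
  then have L4: "\<rho>*(\<rho>^2*yv) > \<rho>*(\<rho>^2*(4*\<alpha>))" using rpos by simp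
  have "\<rho>^2 \<ge> hh*(3/4*N)"
  proof -
    have "N - hh \<ge> 3/4*N" using N4 by linarith
    then have "hh*(N-hh) \<ge> hh*(3/4*N)" using hh2 by (intro mult_left_mono) auto
    then show ?thesis using rho2 by linarith
  qed
  then have L5: "\<rho>*(\<rho>^2*(4*\<alpha>)) \<ge> \<rho>*(hh*(3/4*N)*(4*\<alpha>))"
    using rpos apos by (intro mult_left_mono mult_right_mono) auto
  have "\<rho>*(hh*(3/4*N)*(4*\<alpha>)) < \<rho>*(hh*(\<alpha>*N/3)) + 3*FF*(2*hh*N)"
    using L L2 L3 L4 L5 by linarith
  then have "(hh*N) * (3*(\<alpha>*\<rho>)) < (hh*N) * ((\<alpha>*\<rho>)/3 + 6*FF)"
    by (simp add: algebra_simps)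
  then have "3*(\<alpha>*\<rho>) < (\<alpha>*\<rho>)/3 + 6*FF" using hNpos by (simp add: mult_less_cancel_left_pos)
  then show False using arho FF1 by linarith
qed


theorem lemma4p2:
  fixes k l n :: nat and E :: "nat \<Rightarrow> nat \<Rightarrow> bool" and x :: "nat \<Rightarrow> real"
    and h :: nat and t \<alpha> \<rho> :: real and z :: nat
  assumes k: "k \<ge> 1" and l: "l \<ge> 4"
    and h_def: "h = k + l div 2 - 1"
    and t_def: "t = (real l ^ 2 - real l + 1) * real k + (real l ^ 2 + 3 * real l - 2) / 2"
    and alpha_def: "\<alpha> = 1 / (2 * (real h + 1) * t ^ 2)"
    and n_large: "real n \<ge> t ^ 2 / \<alpha> ^ 3"
    and G: "simple_graph n E" and Gfree: "H_free k l n E"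
    and extremal: "\<And>E'. simple_graph n E' \<Longrightarrow> H_free k l n E' \<Longrightarrow>
                     graph_spectral_radius n E' \<le> graph_spectral_radius n E"
    and conn: "graph_connected n E"
    and rho_def: "\<rho> = graph_spectral_radius n E"
    and x_pos: "\<And>v. v < n \<Longrightarrow> x v > 0"
    and x_unit: "(\<Sum>v<n. (x v)\<^sup>2) = 1"
    and x_eig: "\<And>v. v < n \<Longrightarrow> (\<Sum>u\<in>{u. u < n \<and> E v u}. x u) = \<rho> * x v"
    and z: "z < n" and z_max: "\<And>v. v < n \<Longrightarrow> x v \<le> x z"
  shows "\<forall>v<n. x v > 4 * \<alpha> * x z \<longrightarrow> real (degree n E v) > \<alpha> * real n / 3"
proof -
  have l2: "l div 2 \<ge> 2" using l by linarith
  have h2: "h \<ge> 2" using h_def k l2 by linarith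
  have hh2: "real h \<ge> 2" using h2 by simp
  define FF where "FF = real (k * l + l)"
  have "(1::nat) \<le> k * l + l" using l by simp
  then have FF1: "FF \<ge> 1" unfolding FF_def by (metis of_nat_1 of_nat_le_iff)
  have tF: "t \<ge> 3 * FF"
  proof -
    define L where "L = real l"
    define K where "K = real k"
    have L4: "L \<ge> 4" using l unfolding L_def by simp
    have K0: "K \<ge> 0" unfolding K_def by simp
    have LL: "L * L \<ge> 4 * L" using L4 by (intro mult_right_mono) auto
    have "(L * L - 4 * L + 1) * K \<ge> 0" using LL K0 by (intro mult_nonneg_nonneg) auto
    then have A: "K * (L * L) - 4 * (K * L) + K \<ge> 0" by (simp add: algebra_simps)
    have T: "t = K * (L * L) - K * L + K + (L * L + 3 * L - 2) / 2"
      unfolding t_def L_def K_def by (simp add: power2_eq_square algebra_simps)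
    have F: "FF = K * L + L" unfolding FF_def K_def L_def by simp
    define P where "P = K * (L * L)"
    define Q where "Q = K * L"
    define R where "R = L * L"
    have "0 \<le> P - 4 * Q + K" "t = P - Q + K + (R + 3 * L - 2) / 2" "FF = Q + L" "4 * L \<le> R"
      using A T F LL unfolding P_def Q_def R_def by auto
    then show ?thesis using L4 by argo
  qed
  have N4: "real n \<ge> 4 * real h" by (rule nbig[OF hh2 FF1 tF alpha_def n_large])
  have hn: "h < n" using N4 h2 by linarith
  define E' where "E' = (\<lambda>i j. i < n \<and> j < n \<and> (i < h) \<noteq> (j < h))"
  have "sqrt (real h * real (n - h)) \<le> graph_spectral_radius n E'"
    unfolding E'_def by (rule spec_lower) (use h2 hn in auto)
  also have "\<dots> \<le> \<rho>" unfolding rho_def E'_def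
    by (rule extremal[OF K_simple K_free[OF k _ h_def]]) (use l in auto)
  finally have rho_ge: "sqrt (real h * real (n - h)) \<le> \<rho>" .
  have rho0: "\<rho> \<ge> 0" using rho_ge real_sqrt_ge_zero by (meson order_trans of_nat_0_le_iff mult_nonneg_nonneg)
  have rho2: "\<rho>^2 \<ge> real h * (real n - real h)"
  proof -
    have "(sqrt (real h * real (n - h)))^2 \<le> \<rho>^2"
      using rho_ge by (intro power_mono) auto
    then show ?thesis using hn by (simp add: of_nat_diff)
  qed
  have xz: "x z > 0" using x_pos z by blast
  define y where "y = (\<lambda>w. x w / x z)"
  have y01: "0 \<le> y w \<and> y w \<le> 1" if "w < n" for w
    using x_pos[OF that] z_max[OF that] xz unfolding y_def by (simp add: divide_le_eq_1_pos)
  have eig_y: "(\<Sum>u\<in>{u. u < n \<and> E w u}. y u) = \<rho> * y w" if "w < n" for w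
    unfolding y_def using x_eig[OF that] by (simp add: sum_divide_distrib[symmetric])
  define Y where "Y = (\<Sum>w<n. y w)"
  have Y0: "Y \<ge> 0" unfolding Y_def using y01 by (intro sum_nonneg) auto
  have hreal: "real (k + l div 2 - 1) = real h" using h_def by simp
  have Yb: "\<rho> * Y \<le> real h * real n + 3 * FF * Y"
  proof -
    have "(\<Sum>u\<in>{..<n}. \<Sum>w\<in>{w. w < n \<and> E u w}. y w) = (\<Sum>w<n. real (card {u \<in> {..<n}. E w u}) * y w)"
      by (rule walk[OF G]) simp
    moreover have "(\<Sum>u\<in>{..<n}. \<Sum>w\<in>{w. w < n \<and> E u w}. y w) = \<rho> * Y"
      unfolding Y_def sum_distrib_left by (rule sum.cong) (auto simp: eig_y)
    moreover have "(\<Sum>w<n. real (card {u \<in> {..<n}. E w u}) * y w)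
        \<le> real (k + l div 2 - 1) * real (card {..<n}) + 3 * real (k * l + l) * (\<Sum>w<n. y w)"
      by (rule weighted[OF G Gfree k _ y01]) auto
    ultimately show ?thesis unfolding hreal FF_def Y_def by simp
  qed
  show ?thesis
  proof (intro allI impI)
    fix v assume v: "v < n" and xv: "x v > 4 * \<alpha> * x z"
    show "real (degree n E v) > \<alpha> * real n / 3"
    proof (rule ccontr)
      assume "\<not> real (degree n E v) > \<alpha> * real n / 3"
      then have sb: "real (degree n E v) \<le> \<alpha> * real n / 3" by simp
      define S where "S = {u. u < n \<and> E v u}"
      have S: "S \<subseteq> {..<n}" unfolding S_def by auto
      have degS: "degree n E v = card S"
      proof -
        have "{u. u < n \<and> E u v} = S" unfolding S_def using simple_sym[OF G] by blast
        then show ?thesis unfolding degree_def by simp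
      qed
      have "(\<Sum>u\<in>S. \<Sum>w\<in>{w. w < n \<and> E u w}. y w) = (\<Sum>w<n. real (card {u \<in> S. E w u}) * y w)"
        by (rule walk[OF G S])
      moreover have "(\<Sum>u\<in>S. \<Sum>w\<in>{w. w < n \<and> E u w}. y w) = \<rho>^2 * y v"
      proof -
        have "(\<Sum>u\<in>S. \<Sum>w\<in>{w. w < n \<and> E u w}. y w) = (\<Sum>u\<in>S. \<rho> * y u)"
          by (rule sum.cong) (use S eig_y in auto)
        also have "\<dots> = \<rho> * (\<Sum>u\<in>S. y u)" by (simp add: sum_distrib_left)
        also have "(\<Sum>u\<in>S. y u) = \<rho> * y v" unfolding S_def by (rule eig_y[OF v])
        finally show ?thesis by (simp add: power2_eq_square)
      qed
      moreover have "(\<Sum>w<n. real (card {u \<in> S. E w u}) * y w)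
          \<le> real (k + l div 2 - 1) * real (card S) + 3 * real (k * l + l) * (\<Sum>w<n. y w)"
        by (rule weighted[OF G Gfree k S y01])
      ultimately have main: "\<rho>^2 * y v \<le> real h * real (card S) + 3 * FF * Y"
        unfolding hreal FF_def Y_def by simp
      have yv: "y v > 4 * \<alpha>" unfolding y_def using xv xz by (simp add: pos_less_divide_eq)
      show False
        by (rule numeric[OF hh2 FF1 tF alpha_def n_large rho0 rho2 Yb Y0 main yv])
           (use sb degS in simp)
    qed
  qed
qed


end
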